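(* Let $D\geq 4$ and $n\geq 1$ be integers. Let $\mathcal{S}_{(1)},\mathcal{S}_{(2)},\mathcal{S}_{(3)},\mathcal{S}_{(n+2)},\mathcal{S}_{(n+3)},\mathcal{S}_{(n+4)}$ be scalar curvature invariants (built from the metric and the Riemann tensor) such that for each of these orders $m\in\{1,2,3,n+2,n+3,n+4\}$ and every function $f(r)$ $$\mathcal{S}_{(m)}|_f = r^{2-D}\frac{\mathrm{d}}{\mathrm{d}r}\Big[r^{D-1}\Big(B+\tfrac{D-4}{4}\psi\Big)^{m-1}\Big(2(m-2)B-(D-4+2m)\psi\Big)\Big].$$ Define $$\mathcal{S}_{(n+5)}=-\frac{3(n+3)\mathcal{S}_{(1)}\mathcal{S}_{(n+4)}}{4(D-1)(n+1)}+\frac{3(n+4)\mathcal{S}_{(2)}\mathcal{S}_{(n+3)}}{4(D-1)n}-\frac{(n+3)(n+4)\mathcal{S}_{(3)}\mathcal{S}_{(n+2)}}{4(D-1)n(n+1)}.$$ Then for every $f(r)$, $\mathcal{S}_{(n+5)}|_f$ is given by the same formula with $m=n+5$; in particular $\mathcal{S}_{(n+5)}$ is of the GQTG class.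
   Context: Consider the metric $\mathrm{d}s^2=-f(r)\mathrm{d}t^2+\mathrm{d}r^2/f(r)+r^2\mathrm{d}\Sigma^2_{k}$ in $D$ dimensions, where $\mathrm{d}\Sigma^2_k$ is the metric of a $(D-2)$-dimensional space of constant sectional curvature $k\in\{1,0,-1\}$. For a scalar curvature invariant $\mathcal{L}$, $\mathcal{L}|_f$ denotes its evaluation on this metric, a function of $r,f,f',f''$. Set $A=f''(r)/2$, $B=-f'(r)/(2r)$, $\psi=(k-f(r))/r^2$. A density $\mathcal{L}$ is of the GQTG class if $r^{D-2}\mathcal{L}|_f=\frac{\mathrm{d}}{\mathrm{d}r}F_0(r,f,f')$ for some function $F_0$, for all $f$ (equivalently, the Euler–Lagrange equation of $f$ for $r^{D-2}\mathcal{L}|_f$ vanishes identically). *)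

theory Defs
  imports "HOL-Analysis.Analysis"
begin

text \<open>A scalar invariant L evaluated on the metric with blackening function f is
  represented by its evaluation L|_f as a function of (r, f(r), f'(r), f''(r)):
  type real => real => real => real => real.\<close>

type_synonym eval_fun = "real \<Rightarrow> real \<Rightarrow> real \<Rightarrow> real \<Rightarrow> real"

definition twice_diff :: "(real \<Rightarrow> real) \<Rightarrow> (real \<Rightarrow> real) \<Rightarrow> (real \<Rightarrow> real) \<Rightarrow> bool" where
  "twice_diff f f1 f2 \<longleftrightarrow>
     (\<forall>x. (f has_real_derivative f1 x) (at x)) \<and> (\<forall>x. (f1 has_real_derivative f2 x) (at x))"

definition Bq :: "(real \<Rightarrow> real) \<Rightarrow> real \<Rightarrow> real" where
  "Bq f1 r = - f1 r / (2 * r)"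

definition psiq :: "real \<Rightarrow> (real \<Rightarrow> real) \<Rightarrow> real \<Rightarrow> real" where
  "psiq k f r = (k - f r) / r ^ 2"

definition profile :: "nat \<Rightarrow> real \<Rightarrow> nat \<Rightarrow> (real \<Rightarrow> real) \<Rightarrow> (real \<Rightarrow> real) \<Rightarrow> real \<Rightarrow> real" where
  "profile D k m f f1 r =
     r ^ (D - 1) * (Bq f1 r + (real D - 4) / 4 * psiq k f r) ^ (m - 1)
       * (2 * (real m - 2) * Bq f1 r - (real D - 4 + 2 * real m) * psiq k f r)"

definition is_GQTG :: "nat \<Rightarrow> eval_fun \<Rightarrow> bool" where
  "is_GQTG D L \<longleftrightarrow> (\<exists>F0 :: real \<Rightarrow> real \<Rightarrow> real \<Rightarrow> real.
     \<forall>f f1 f2 r. twice_diff f f1 f2 \<and> r > 0 \<longrightarrow>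
       ((\<lambda>s. F0 s (f s) (f1 s)) has_real_derivative r ^ (D - 2) * L r (f r) (f1 r) (f2 r)) (at r))"

text \<open>The recursively defined density S_(n+5); evaluation of a product of invariants is
  the product of the evaluations.\<close>
definition S_next :: "nat \<Rightarrow> nat \<Rightarrow> (nat \<Rightarrow> eval_fun) \<Rightarrow> eval_fun" where
  "S_next D n S = (\<lambda>r x y z.
     - 3 * (real n + 3) * S 1 r x y z * S (n + 4) r x y z / (4 * (real D - 1) * (real n + 1))
     + 3 * (real n + 4) * S 2 r x y z * S (n + 3) r x y z / (4 * (real D - 1) * real n)
     - (real n + 3) * (real n + 4) * S 3 r x y z * S (n + 2) r x y z
         / (4 * (real D - 1) * real n * (real n + 1)))"

end

theory Submission imports Defs begin

lemma Bq_deriv: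
  assumes td: "twice_diff f f1 f2" and r: "r \<noteq> 0"
  shows "(Bq f1 has_real_derivative (- f2 r / (2*r) + f1 r / (2*r^2))) (at r)"
proof -
  have d1: "(f1 has_real_derivative f2 r) (at r)" using td unfolding twice_diff_def by blast
  have "((\<lambda>s. (- f1 s) / (2 * s)) has_real_derivative (- f2 r * (2*r) - (- f1 r) * 2) / (2*r)^2) (at r)"
    by (rule derivative_eq_intros refl d1 | simp add: r power2_eq_square)+
  moreover have "(- f2 r * (2*r) - (- f1 r) * 2) / (2*r)^2 = - f2 r / (2*r) + f1 r / (2*r^2)"
    using r by (simp add: field_simps power2_eq_square)
  ultimately show ?thesis unfolding Bq_def[abs_def] by simp
qed

lemma psi_deriv:
  assumes td: "twice_diff f f1 f2" and r: "r \<noteq> 0"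
  shows "(psiq k f has_real_derivative (- f1 r / r^2 - 2 * (k - f r) / r^3)) (at r)"
proof -
  have d1: "(f has_real_derivative f1 r) (at r)" using td unfolding twice_diff_def by blast
  have "((\<lambda>s. (k - f s) / s^2) has_real_derivative ((0 - f1 r) * r^2 - (k - f r) * (2 * r)) / (r^2)^2) (at r)"
    apply (rule derivative_eq_intros refl d1 | simp add: r)+
    done
  moreover have "((0 - f1 r) * r^2 - (k - f r) * (2 * r)) / (r^2)^2 = - f1 r / r^2 - 2 * (k - f r) / r^3"
    using r by (simp add: field_simps power2_eq_square power3_eq_cube)
  ultimately show ?thesis unfolding psiq_def[abs_def] by simp
qed


lemma prof_deriv:
  fixes D m :: nat and k :: real
  assumes td: "twice_diff f f1 f2" and r: "r \<noteq> 0"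
  defines "X \<equiv> Bq f1 r + (real D - 4)/4 * psiq k f r"
    and "Y \<equiv> 2*(real m - 2)*Bq f1 r - (real D - 4 + 2*real m)*psiq k f r"
    and "dB \<equiv> - f2 r / (2*r) + f1 r / (2*r^2)"
    and "dP \<equiv> - f1 r / r^2 - 2 * (k - f r) / r^3"
  shows "(profile D k m f f1 has_real_derivative
     real (D-1) * r^(D-2) * X^(m-1) * Y + r^(D-1) * (real (m-1) * X^(m-2) * (dB + (real D - 4)/4 * dP) * Y
        + X^(m-1) * (2*(real m - 2)*dB - (real D - 4 + 2*real m)*dP))) (at r)"
proof -
  note b = Bq_deriv[OF td r] and p = psi_deriv[OF td r, of k]
  define c where "c = (real D - 4)/4"
  define e where "e = (real D - 4 + 2*real m)"
  have hX: "((\<lambda>s. Bq f1 s + c * psiq k f s) has_real_derivative dB + c*dP) (at r)"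
    unfolding dB_def dP_def by (rule DERIV_add[OF b DERIV_cmult[OF p]])
  have hY: "((\<lambda>s. 2*(real m - 2) * Bq f1 s - e * psiq k f s) has_real_derivative 2*(real m - 2) * dB - e*dP) (at r)"
    unfolding dB_def dP_def by (rule DERIV_diff[OF DERIV_cmult[OF b] DERIV_cmult[OF p]])
  note hXp = DERIV_power[OF hX, of "m-1"]
  note hr = DERIV_pow[of "D-1" r UNIV]
  note H = DERIV_mult'[OF DERIV_mult'[OF hr hXp] hY]
  have eq: "r ^ (D - 1) * (Bq f1 r + c * psiq k f r) ^ (m - 1) * (2 * (real m - 2) * dB - e * dP) +
    (r ^ (D - 1) * (of_nat (m - 1) * ((dB + c * dP) * (Bq f1 r + c * psiq k f r) ^ (m - 1 - Suc 0))) +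
     real (D - 1) * r ^ (D - 1 - Suc 0) * (Bq f1 r + c * psiq k f r) ^ (m - 1)) *
    (2 * (real m - 2) * Bq f1 r - e * psiq k f r)
    = real (D-1) * r^(D-2) * X^(m-1) * Y + r^(D-1) * (real (m-1) * X^(m-2) * (dB + (real D - 4)/4 * dP) * Y
        + X^(m-1) * (2*(real m - 2)*dB - (real D - 4 + 2*real m)*dP))"
  proof -
    have n1: "D - 1 - Suc 0 = D - 2" "m - 1 - Suc 0 = m - 2" by auto
    show ?thesis unfolding n1 X_def Y_def c_def e_def of_nat_def[symmetric] by algebra
  qed
  show ?thesis unfolding profile_def[abs_def] using H unfolding eq[symmetric] c_def e_def .
qed
definition Qp :: "real \<Rightarrow> real \<Rightarrow> real \<Rightarrow> real \<Rightarrow> real \<Rightarrow> real" where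
  "Qp c X Z p m = 2*(m-6-8*c+2*c*m)*X^2 + 2*m*(m-2)*X*Z - 2*m*(1+c)*(1+2*c)*X*p - 2*m*(m-1)*(1+c)*Z*p"

definition S1p :: "real \<Rightarrow> real \<Rightarrow> real \<Rightarrow> real \<Rightarrow> real" where
  "S1p c X Z p = -2*(5+6*c)*X - 2*Z - 2*(1+c)*(1+2*c)*p"

lemma keypoly:
  "- 3 * (n + 3) * n * S1p c X Z p * Qp c X Z p (n + 4) * X
     + 3 * (n + 4) * (n+1) * Qp c X Z p 2 * Qp c X Z p (n + 3)
     - (n + 3) * (n + 4) * Qp c X Z p 3 * Qp c X Z p (n + 2)
     = 4 * (4*c+3) * n * (n + 1) * X^2 * Qp c X Z p (n+5)"
  unfolding Qp_def S1p_def
  by algebra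

lemma Qform:
  fixes A B p c m :: real
  shows "(4*c+3)*(B + c*p)*(2*(m - 2)*B - (4*c + 2*m)*p)
     + (m-1) * (-(A+B) + c*(2*B-2*p)) * (2*(m - 2)*B - (4*c + 2*m)*p)
     + (B + c*p) * (2*(m - 2)*(-(A+B)) - (4*c + 2*m)*(2*B - 2*p))
     = Qp c (B + c*p) (-(A+B) + c*(2*B-2*p)) p m"
  unfolding Qp_def by algebra

lemma rdP_aux: fixes r b u k :: real shows "r \<noteq> 0 \<Longrightarrow> r*(- b / r^2 - 2 * (k - u) / r^3) = 2*(-b/(2*r))-2*((k-u)/r^2)"
proof -
  assume r: "r \<noteq> 0"
  have a: "r * (b / r^2) = b / r" using r by (simp add: power2_eq_square)
  have c: "r * ((k-u) / r^3) = (k-u) / r^2" using r by (simp add: power2_eq_square power3_eq_cube)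
  have "r*(- b / r^2 - 2 * (k - u) / r^3) = - (r * (b / r^2)) - 2 * (r * ((k-u) / r^3))" by (simp add: algebra_simps)
  also have "... = - (b/r) - 2*((k-u)/r^2)" unfolding a c ..
  finally show ?thesis by simp
qed

lemma pw_aux: fixes D :: nat and r :: real assumes D: "D \<ge> 4" and r0: "r \<noteq> 0"
shows "r powi (2 - int D) * r^(D-2) = 1"
proof -
  have "2 - int D = - int (D-2)" using D by linarith
  then have "r powi (2 - int D) = inverse (r ^ (D-2))" by (simp only: power_int_minus power_int_of_nat)
  then show ?thesis using r0 by simp
qed

lemma pw2_aux: fixes D :: nat and r :: real assumes D: "D \<ge> 4" shows  "r^(D-1) = r^(D-2) * r"
proof -
  have "D - 1 = Suc (D-2)" using D by simp
  then show ?thesis by (simp only: power_Suc2)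
qed

lemma x1_aux: fixes X :: real assumes "m \<ge> 2" shows "X^(m-1) = X^(m-2) * X"
proof -
  have "m - 1 = Suc (m-2)" using assms by simp
  then show ?thesis by (simp only: power_Suc2)
qed

lemma Eform:
  fixes D m :: nat and k r :: real
  assumes td: "twice_diff f f1 f2" and r: "r > 0" and D: "D \<ge> 4"
  defines "c \<equiv> (real D - 4)/4"
  defines "B \<equiv> Bq f1 r" and "p \<equiv> psiq k f r" and "A \<equiv> f2 r / 2"
  defines "X \<equiv> B + c*p" and "Z \<equiv> -(A+B) + c*(2*B-2*p)"
  shows "m \<ge> 2 \<Longrightarrow> r powi (2 - int D) * deriv (profile D k m f f1) r = X^(m-2) * Qp c X Z p (real m)"
    and "m = 1 \<Longrightarrow> r powi (2 - int D) * deriv (profile D k m f f1) r = S1p c X Z p"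
proof -
  define dB where "dB = - f2 r / (2*r) + f1 r / (2*r^2)"
  define dP where "dP = - f1 r / r^2 - 2 * (k - f r) / r^3"
  define Y where "Y = 2*(real m - 2)*B - (4*c + 2*real m)*p"
  define W where "W = 2*(real m - 2)*(-(A+B)) - (4*c + 2*real m)*(2*B - 2*p)"
  have r0: "r \<noteq> 0" using r by simp
  have dv: "deriv (profile D k m f f1) r = real (D-1) * r^(D-2) * X^(m-1) * Y + r^(D-1) * (real (m-1) * X^(m-2) * (dB + c * dP) * Y
        + X^(m-1) * (2*(real m - 2)*dB - (4*c + 2*real m)*dP))"
  proof -
    have e1: "real D - 4 + 2*real m = 4*c + 2*real m" unfolding c_def by simp
    show ?thesis
      apply (rule DERIV_imp_deriv)
      using prof_deriv[OF td r0, of D k m] unfolding dB_def dP_def X_def Y_def B_def p_def c_def e1[unfolded c_def]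
      by simp
  qed
  define P where "P = r powi (2 - int D)"
  have pw1: "P * r^(D-2) = 1" unfolding P_def by (rule pw_aux[OF D r0])
  have pw2: "r^(D-1) = r^(D-2) * r" by (rule pw2_aux[OF D])
  have rdB: "r*dB = -(A+B)" unfolding dB_def A_def B_def Bq_def using r0 by (simp add: field_simps power2_eq_square)
  have rdP: "r*dP = 2*B-2*p" unfolding dP_def p_def B_def Bq_def psiq_def using rdP_aux[OF r0] .
  have D1: "real (D-1) = 4*c+3" unfolding c_def using D by (simp add: of_nat_diff field_simps)
  have E: "P * deriv (profile D k m f f1) r = (4*c+3) * X^(m-1) * Y + real (m-1) * X^(m-2) * Z * Y + X^(m-1) * W"
  proof -
    have "P * deriv (profile D k m f f1) r = (P * r^(D-2)) * (real (D-1) * X^(m-1) * Y) +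
       (P * r^(D-2)) * (real (m-1) * X^(m-2) * (r*dB + c * (r*dP)) * Y
        + X^(m-1) * (2*(real m - 2)*(r*dB) - (4*c + 2*real m)*(r*dP)))"
      unfolding dv pw2 by algebra
    also have "\<dots> = (4*c+3) * X^(m-1) * Y + real (m-1) * X^(m-2) * Z * Y + X^(m-1) * W"
      unfolding pw1 rdB rdP D1 Z_def W_def by algebra
    finally show ?thesis .
  qed
  show "m \<ge> 2 \<Longrightarrow> r powi (2 - int D) * deriv (profile D k m f f1) r = X^(m-2) * Qp c X Z p (real m)"
  proof -
    assume m: "m \<ge> 2"
    have x1: "X^(m-1) = X^(m-2) * X" by (rule x1_aux[OF m])
    have m1: "real (m-1) = real m - 1" using m by simp
    have "Qp c X Z p (real m) = (4*c+3) * X * Y + (real m - 1) * Z * Y + X * W"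
      unfolding Qform[of c B p "real m" A, symmetric] X_def Z_def Y_def W_def by simp
    note hq = this
    have "r powi (2 - int D) * deriv (profile D k m f f1) r = (4*c+3) * (X^(m-2)*X) * Y + (real m - 1) * X^(m-2) * Z * Y + X^(m-2)*X * W"
      using E unfolding P_def x1 m1 .
    also have "\<dots> = X^(m-2) * ((4*c+3) * X * Y + (real m - 1) * Z * Y + X * W)" by algebra
    also have "\<dots> = X^(m-2) * Qp c X Z p (real m)" unfolding hq ..
    finally show ?thesis .
  qed
  show "m = 1 \<Longrightarrow> r powi (2 - int D) * deriv (profile D k m f f1) r = S1p c X Z p"
  proof -
    assume m: "m = 1"
    have E1: "r powi (2 - int D) * deriv (profile D k m f f1) r = (4*c+3) * Y + W"
      using E unfolding P_def m by simp
    have "(4*c+3) * Y + W = S1p c X Z p" unfolding Y_def W_def S1p_def X_def Z_def m of_nat_1 by algebra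
    then show ?thesis using E1 by simp
  qed
qed

lemma final_alg:
  fixes n D1 X q aa q2 q3 qn2 qn3 qn4 qn5 :: real
  assumes n: "n > 0" and D1: "D1 \<noteq> 0"
  and K: "-3*(n+3)*n* aa *qn4*X + 3*(n+4)*(n+1)*q2*qn3 - (n+3)*(n+4)*q3*qn2 = 4*D1*n*(n+1)*X^2*qn5"
  shows "- 3 * (n + 3) * aa * (q*X^2*qn4) / (4 * D1 * (n + 1))
     + 3 * (n + 4) * q2 * (q*X*qn3) / (4 * D1 * n)
     - (n + 3) * (n + 4) * (X*q3) * (q*qn2) / (4 * D1 * n * (n + 1)) = q*X^3*qn5"
proof -
  have n1: "n + 1 \<noteq> 0" and n0: "n \<noteq> 0" using n by simp_all
  define M where "M = 4 * D1 * n * (n + 1)"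
  have M0: "M \<noteq> 0" unfolding M_def using n0 n1 D1 by simp
  have a: "- 3 * (n + 3) * aa * (q*X^2*qn4) / (4 * D1 * (n + 1)) = (- 3 * (n + 3) * aa * (q*X^2*qn4) * n) / M"
    unfolding M_def using n0 by simp
  have b: "3 * (n + 4) * q2 * (q*X*qn3) / (4 * D1 * n) = (3 * (n + 4) * q2 * (q*X*qn3) * (n+1)) / M"
    unfolding M_def using n1 by simp
  have c: "(n + 3) * (n + 4) * (X*q3) * (q*qn2) / (4 * D1 * n * (n + 1)) = (n + 3) * (n + 4) * (X*q3) * (q*qn2) / M"
    unfolding M_def by simp
  have num: "- 3 * (n + 3) * aa * (q*X^2*qn4) * n + 3 * (n + 4) * q2 * (q*X*qn3) * (n+1) - (n + 3) * (n + 4) * (X*q3) * (q*qn2)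
     = q*X*(-3*(n+3)*n* aa *qn4*X + 3*(n+4)*(n+1)*q2*qn3 - (n+3)*(n+4)*q3*qn2)" by algebra
  have h: "q*X*(-3*(n+3)*n* aa *qn4*X + 3*(n+4)*(n+1)*q2*qn3 - (n+3)*(n+4)*q3*qn2) = M * (q*X^3*qn5)"
    unfolding K M_def by algebra
  then show ?thesis unfolding a b c add_divide_distrib[symmetric] diff_divide_distrib[symmetric] num h
    using M0 by simp
qed

theorem mainTheorem2:
  fixes D n :: nat and k :: real and S :: "nat \<Rightarrow> eval_fun"
  assumes "D \<ge> 4" and "n \<ge> 1" and "k \<in> {-1, 0, 1}"
    and "\<forall>m \<in> {1, 2, 3, n + 2, n + 3, n + 4}. \<forall>f f1 f2 r.
           twice_diff f f1 f2 \<and> r > 0 \<longrightarrow>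
           S m r (f r) (f1 r) (f2 r) = r powi (2 - int D) * deriv (profile D k m f f1) r"
  shows "(\<forall>f f1 f2 r. twice_diff f f1 f2 \<and> r > 0 \<longrightarrow>
            S_next D n S r (f r) (f1 r) (f2 r)
              = r powi (2 - int D) * deriv (profile D k (n + 5) f f1) r)
         \<and> is_GQTG D (S_next D n S)"
proof -
  note D = assms(1) and hS = assms(4)
  have part1: "S_next D n S r (f r) (f1 r) (f2 r) = r powi (2 - int D) * deriv (profile D k (n + 5) f f1) r"
    if td: "twice_diff f f1 f2" and r: "r > 0" for f f1 f2 r
  proof -
    define c where "c \<equiv> (real D - 4)/4"
    define B where "B \<equiv> Bq f1 r"
    define p where "p \<equiv> psiq k f r"
    define A where "A \<equiv> f2 r / 2"
    define X where "X \<equiv> B + c*p"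
    define Z where "Z \<equiv> -(A+B) + c*(2*B-2*p)"
    note EF = Eform[OF td r D, where k=k, folded c_def B_def p_def A_def, folded X_def Z_def]
    have Sm: "S m r (f r) (f1 r) (f2 r) = r powi (2 - int D) * deriv (profile D k m f f1) r"
      if "m \<in> {1, 2, 3, n + 2, n + 3, n + 4}" for m using hS that td r by blast
    have e1: "S 1 r (f r) (f1 r) (f2 r) = S1p c X Z p" using Sm[of 1] EF(2)[of 1] by simp
    have e2: "S 2 r (f r) (f1 r) (f2 r) = Qp c X Z p 2" using Sm[of 2] EF(1)[of 2] by simp
    have e3: "S 3 r (f r) (f1 r) (f2 r) = X * Qp c X Z p 3" using Sm[of 3] EF(1)[of 3] by simp
    have e4: "S (n+2) r (f r) (f1 r) (f2 r) = X^n * Qp c X Z p (real n + 2)" using Sm[of "n+2"] EF(1)[of "n+2"] by (simp add: ac_simps)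
    have e5: "S (n+3) r (f r) (f1 r) (f2 r) = X^n * X * Qp c X Z p (real n + 3)" using Sm[of "n+3"] EF(1)[of "n+3"] by (simp add: ac_simps)
    have e6: "S (n+4) r (f r) (f1 r) (f2 r) = X^n * X^2 * Qp c X Z p (real n + 4)"
      using Sm[of "n+4"] EF(1)[of "n+4"] by (simp add: power_add ac_simps power2_eq_square power3_eq_cube)
    have e7: "r powi (2 - int D) * deriv (profile D k (n + 5) f f1) r = X^n * X^3 * Qp c X Z p (real n + 5)"
      using EF(1)[of "n+5"] by (simp add: power_add ac_simps power2_eq_square power3_eq_cube)
    have D1: "real D - 1 = 4*c+3" unfolding c_def by (simp add: field_simps)
    have D10: "4*c+3 \<noteq> 0"
    proof -
      have "real D \<ge> 4" using D by simp
      then show ?thesis using D1 by linarith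
    qed
    have n0: "real n > 0" using assms(2) by simp
    have K: "- 3 * (real n + 3) * real n * S1p c X Z p * Qp c X Z p (real n + 4) * X
     + 3 * (real n + 4) * (real n+1) * Qp c X Z p 2 * Qp c X Z p (real n + 3)
     - (real n + 3) * (real n + 4) * Qp c X Z p 3 * Qp c X Z p (real n + 2)
     = 4 * (4*c+3) * real n * (real n + 1) * X^2 * Qp c X Z p (real n+5)"
      by (rule keypoly)
    show ?thesis
      unfolding S_next_def e1 e2 e3 e4 e5 e6 e7 D1
      using final_alg[OF n0 D10 K, of "X^n"] by (simp add: algebra_simps)
  qed
  show ?thesis
  proof (intro conjI allI impI)
    fix f f1 f2 :: "real \<Rightarrow> real" and r :: real assume "twice_diff f f1 f2 \<and> r > 0"
    then show "S_next D n S r (f r) (f1 r) (f2 r) = r powi (2 - int D) * deriv (profile D k (n + 5) f f1) r"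
      using part1 by blast
  next
    define F0 where "F0 = (\<lambda>s a b. s ^ (D - 1) * (- b / (2 * s) + (real D - 4) / 4 * ((k - a) / s ^ 2)) ^ (n + 5 - 1) *
       (2 * (real (n+5) - 2) * (- b / (2 * s)) - (real D - 4 + 2 * real (n+5)) * ((k - a) / s ^ 2)))"
    show "is_GQTG D (S_next D n S)"
      unfolding is_GQTG_def
    proof (intro exI[of _ F0] allI impI)
      fix f f1 f2 :: "real \<Rightarrow> real" and r :: real assume h: "twice_diff f f1 f2 \<and> 0 < r"
      have feq: "(\<lambda>s. F0 s (f s) (f1 s)) = profile D k (n+5) f f1"
        unfolding F0_def profile_def[abs_def] Bq_def psiq_def by simp
      have r0: "r \<noteq> 0" using h by simp
      obtain V where V: "(profile D k (n+5) f f1 has_real_derivative V) (at r)"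
        using prof_deriv[OF conjunct1[OF h] r0, of D k "n+5"] by blast
      have dv: "deriv (profile D k (n+5) f f1) r = V" using V by (rule DERIV_imp_deriv)
      have "r ^ (D - 2) * S_next D n S r (f r) (f1 r) (f2 r) = (r powi (2 - int D) * r ^ (D - 2)) * V"
        using part1[OF conjunct1[OF h] conjunct2[OF h]] dv by simp
      also have "\<dots> = V" using pw_aux[OF D r0] by simp
      finally show "((\<lambda>s. F0 s (f s) (f1 s)) has_real_derivative r ^ (D - 2) * S_next D n S r (f r) (f1 r) (f2 r)) (at r)"
        unfolding feq using V by simp
    qed
  qed
qed
end
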